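(* Let $\psi_0:\mathbb{R}\to\mathbb{R}$ be a càdlàg function with $\lim_{|x|\to\infty}x^{-2}\psi_0(x)=0$, and let $\bar c$, $a(\cdot)$ and $\mathcal{A}$ be as in the context. Then (i) $\mathrm{Supp}(d\bar c)\subseteq \mathcal{A}$; (ii) $\{y:\exists\, x \text{ with } a(x)=y\}\subseteq \mathrm{Supp}(d\bar c)$. Consequently, if $\{y:\exists\, x \text{ with } a(x)=y\}$ is closed, then $\mathrm{Supp}(d\bar c)=\mathcal{A}$.
   Context: For $x\in\mathbb{R}$, $a(x)$ is the largest maximizer of $y\mapsto \psi_0(y)\vee\psi_0(y-)-\tfrac12(y-x)^2$ over $y\in\mathbb{R}$, i.e. the supremum of the set of all $y$ at which this supremum is attained. The shock structure is $\mathcal{A}:=\overline{\{y\in\mathbb{R}: a(x)=y \text{ for some } x\in\mathbb{R}\}}$ (closure of the range of $a$). $\bar C:\mathbb{R}\to\mathbb{R}$ denotes the concave majorant of $x\mapsto \psi_0(x)-\tfrac12 x^2$, i.e. the minimal concave function with $\bar C(x)\ge (\psi_0(x)\vee\psi_0(x-))-\tfrac12x^2$ for all $x$; $\bar c$ is its right-continuous derivative, which is non-increasing, and $d\bar c$ is the associated Stieltjes measure; $\mathrm{Supp}(d\bar c)$ is its support. *)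

theory Defs
  imports "HOL-Analysis.Analysis"
begin

definition left_lim :: "(real \<Rightarrow> real) \<Rightarrow> real \<Rightarrow> real" where
  "left_lim f y = Lim (at_left y) f"

definition cadlag :: "(real \<Rightarrow> real) \<Rightarrow> bool" where
  "cadlag f \<longleftrightarrow> (\<forall>x. continuous (at_right x) f \<and> (\<exists>l. (f \<longlongrightarrow> l) (at_left x)))"

definition usc_version :: "(real \<Rightarrow> real) \<Rightarrow> real \<Rightarrow> real" where
  "usc_version f y = max (f y) (left_lim f y)"

definition amax :: "(real \<Rightarrow> real) \<Rightarrow> real \<Rightarrow> real" where
  "amax psi0 x = Sup {y. \<forall>z. usc_version psi0 z - (z - x)\<^sup>2 / 2
                             \<le> usc_version psi0 y - (y - x)\<^sup>2 / 2}"

definition shock_structure :: "(real \<Rightarrow> real) \<Rightarrow> real set" where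
  "shock_structure psi0 = closure (range (amax psi0))"

definition concave_majorant :: "(real \<Rightarrow> real) \<Rightarrow> real \<Rightarrow> real" where
  "concave_majorant g x = Inf {D x | D. concave_on UNIV D \<and> (\<forall>z. g z \<le> D z)}"

definition Cbar :: "(real \<Rightarrow> real) \<Rightarrow> real \<Rightarrow> real" where
  "Cbar psi0 = concave_majorant (\<lambda>x. usc_version psi0 x - x\<^sup>2 / 2)"

definition right_deriv :: "(real \<Rightarrow> real) \<Rightarrow> real \<Rightarrow> real" where
  "right_deriv f x = Lim (at_right 0) (\<lambda>h. (f (x + h) - f x) / h)"

definition cbar :: "(real \<Rightarrow> real) \<Rightarrow> real \<Rightarrow> real" where
  "cbar psi0 = right_deriv (Cbar psi0)"

text \<open>Support of the Stieltjes measure dc of a monotone right-continuous c: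
  y is in the support iff every open interval around y has nonzero dc-measure,
  i.e. c is not constant on any open neighbourhood of y.\<close>
definition stieltjes_support :: "(real \<Rightarrow> real) \<Rightarrow> real set" where
  "stieltjes_support c = {y. \<forall>e>0. \<not> (\<exists>k. \<forall>z\<in>{y - e<..<y + e}. c z = k)}"

end

theory Submission
  imports Defs
begin

lemma concave_3pt:
  fixes f :: "real \<Rightarrow> real"
  assumes cf: "concave_on UNIV f" and pm: "p < m" and mr: "m < r"
  shows "f p * (r - m) + f r * (m - p) \<le> f m * (r - p)"
proof -
  define t where "t = (m - p) / (r - p)"
  have t0: "t \<ge> 0" "t \<le> 1" using pm mr by (auto simp: t_def divide_simps)
  have tt: "t * (r - p) = m - p" using pm mr by (simp add: t_def)
  have mt: "(1 - t) * p + t * r = m" using tt by (simp add: algebra_simps)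
  have "(1 - t) * f p + t * f r \<le> f ((1 - t) *\<^sub>R p + t *\<^sub>R r)"
    using concave_onD[OF cf t0] by simp
  hence "(1 - t) * f p + t * f r \<le> f m" using mt by simp
  hence "((1 - t) * f p + t * f r) * (r - p) \<le> f m * (r - p)"
    using pm mr by (intro mult_right_mono) auto
  moreover have "((1 - t) * f p + t * f r) * (r - p) = f p * (r - p) - f p * (t * (r - p)) + f r * (t * (r - p))"
    by (simp add: algebra_simps)
  moreover have "\<dots> = f p * (r - m) + f r * (m - p)" by (simp only: tt) (simp add: algebra_simps)
  ultimately show ?thesis by simp
qed

lemma concave_affine: "concave_on UNIV (\<lambda>z::real. a + b * z)"
  by (simp add: concave_on_iff algebra_simps) (metis distrib_left mult.commute mult_1 order_refl)

lemma concave_min: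
  fixes f h :: "real \<Rightarrow> real"
  assumes "concave_on UNIV f" "concave_on UNIV h"
  shows "concave_on UNIV (\<lambda>z. min (f z) (h z))"
  using assms unfolding concave_on_iff
  by (smt (verit, ccfv_SIG) mult_left_mono)

definition rq :: "(real \<Rightarrow> real) \<Rightarrow> real \<Rightarrow> real \<Rightarrow> real" where
  "rq f s h = (f (s + h) - f s) / h"

lemma rq_mono:
  assumes cf: "concave_on UNIV f" and "0 < h1" "h1 < h2"
  shows "rq f s h2 \<le> rq f s h1"
proof -
  have "f s * (s + h2 - (s + h1)) + f (s + h2) * (s + h1 - s) \<le> f (s + h1) * (s + h2 - s)"
    using concave_3pt[OF cf, of s "s + h1" "s + h2"] assms by simp
  hence "(f (s + h2) - f s) * h1 \<le> (f (s + h1) - f s) * h2" by (simp add: algebra_simps)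
  thus ?thesis using assms unfolding rq_def by (simp add: divide_simps mult.commute)
qed

lemma rq_left:
  assumes cf: "concave_on UNIV f" and "0 < h" "t < s"
  shows "rq f s h \<le> (f s - f t) / (s - t)"
proof -
  have "f t * (s + h - s) + f (s + h) * (s - t) \<le> f s * (s + h - t)"
    using concave_3pt[OF cf, of t s "s + h"] assms by simp
  hence "(f (s + h) - f s) * (s - t) \<le> (f s - f t) * h" by (simp add: algebra_simps)
  thus ?thesis using assms unfolding rq_def by (simp add: divide_simps mult.commute)
qed

lemma right_deriv_super:
  fixes f :: "real \<Rightarrow> real"
  assumes cf: "concave_on UNIV f"
  shows "f t \<le> f s + right_deriv f s * (t - s)"
proof -
  define L where "L = Sup (rq f s ` {0<..})"
  have bdd: "bdd_above (rq f s ` {0<..})"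
    using rq_left[OF cf _, of _ "s - 1" s] by (intro bdd_aboveI2[of _ _ "(f s - f (s - 1)) / (s - (s - 1))"]) auto
  have ne: "rq f s ` {0<..} \<noteq> {}" by auto
  have up: "rq f s h \<le> L" if "h > 0" for h
    unfolding L_def using bdd that by (intro cSup_upper) auto
  have lim: "(rq f s \<longlongrightarrow> L) (at_right 0)"
  proof (rule order_tendstoI)
    fix a assume "a < L"
    then obtain h0 where h0: "h0 > 0" "a < rq f s h0"
      using less_cSup_iff[OF ne bdd] unfolding L_def by auto
    show "\<forall>\<^sub>F h in at_right 0. a < rq f s h"
      unfolding eventually_at_right_field
      using h0 rq_mono[OF cf] by (intro exI[of _ h0]) (smt (verit))
  next
    fix a assume "a > L"
    show "\<forall>\<^sub>F h in at_right 0. rq f s h < a"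
      unfolding eventually_at_right_field
      using up \<open>a > L\<close> by (intro exI[of _ 1]) force
  qed
  have rd: "right_deriv f s = L"
    unfolding right_deriv_def using lim unfolding rq_def
    by (intro tendsto_Lim) auto
  show ?thesis
  proof (cases t s rule: linorder_cases)
    case less
    have "L \<le> (f s - f t) / (s - t)"
      unfolding L_def using ne rq_left[OF cf _ less] by (intro cSup_least) auto
    hence "L * (s - t) \<le> f s - f t" using less by (simp add: divide_simps)
    thus ?thesis using rd by (simp add: algebra_simps)
  next
    case greater
    have "rq f s (t - s) \<le> L" using up greater by simp
    hence "f t - f s \<le> L * (t - s)" using greater unfolding rq_def by (simp add: divide_simps)
    thus ?thesis using rd by (simp add: algebra_simps)
  qed simp
qed

definition usc :: "(real \<Rightarrow> real) \<Rightarrow> bool" where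
  "usc f \<longleftrightarrow> (\<forall>y e. e > 0 \<longrightarrow> (\<exists>d>0. \<forall>z. \<bar>z - y\<bar> < d \<longrightarrow> f z < f y + e))"

lemma usc_open: assumes "usc f" shows "open {z. f z < c}"
  unfolding open_dist
proof safe
  fix x assume "f x < c"
  then obtain d where "d > 0" "\<forall>z. \<bar>z - x\<bar> < d \<longrightarrow> f z < f x + (c - f x)"
    using assms unfolding usc_def by (meson diff_gt_0_iff_gt)
  thus "\<exists>e>0. \<forall>y. dist y x < e \<longrightarrow> y \<in> {z. f z < c}" by (auto simp: dist_real_def)
qed

lemma usc_closed: assumes "usc f" shows "closed {z. c \<le> f z}"
proof -
  have "{z. c \<le> f z} = - {z. f z < c}" by auto
  thus ?thesis using usc_open[OF assms] by (simp add: closed_def)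
qed

lemma usc_bdd:
  assumes u: "usc f" and K: "compact K"
  shows "\<exists>B. \<forall>z\<in>K. f z \<le> B"
proof -
  obtain C where C: "C \<subseteq> K" "finite C" "K \<subseteq> (\<Union>x\<in>C. {z. f z < f x + 1})"
  proof -
    have "K \<subseteq> (\<Union>x\<in>K. {z. f z < f x + 1})" by fastforce
    from compactE_image[OF K, of K "\<lambda>x. {z. f z < f x + 1}", OF usc_open[OF u] this]
    show ?thesis using that by metis
  qed
  show ?thesis
  proof (intro exI[of _ "Max ((\<lambda>x. f x + 1) ` C)"] ballI)
    fix z assume "z \<in> K"
    then obtain x where "x \<in> C" "f z < f x + 1" using C by auto
    moreover have "f x + 1 \<le> Max ((\<lambda>x. f x + 1) ` C)" using C \<open>x \<in> C\<close> by (intro Max_ge) auto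
    ultimately show "f z \<le> Max ((\<lambda>x. f x + 1) ` C)" by simp
  qed
qed

lemma usc_attains:
  assumes u: "usc f" and K: "compact K" and ne: "K \<noteq> {}"
  shows "\<exists>x\<in>K. \<forall>z\<in>K. f z \<le> f x"
proof (rule ccontr)
  assume na: "\<not> ?thesis"
  obtain B where B: "\<forall>z\<in>K. f z \<le> B" using usc_bdd[OF u K] by blast
  define S where "S = Sup (f ` K)"
  have bdd: "bdd_above (f ` K)" using B by (auto intro: bdd_aboveI2)
  have le: "f z \<le> S" if "z \<in> K" for z unfolding S_def using bdd that by (intro cSup_upper) auto
  have lt: "f x < S" if xK: "x \<in> K" for x
  proof -
    obtain z where "z \<in> K" "f z > f x" using na xK by (meson not_le)
    thus ?thesis using le by force
  qed
  obtain C where C: "C \<subseteq> K" "finite C" "K \<subseteq> (\<Union>x\<in>C. {z. f z < (f x + S) / 2})"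
  proof -
    have "K \<subseteq> (\<Union>x\<in>K. {z. f z < (f x + S) / 2})" using lt by fastforce
    from compactE_image[OF K, of K "\<lambda>x. {z. f z < (f x + S) / 2}", OF usc_open[OF u] this]
    show ?thesis using that by metis
  qed
  have Cne: "C \<noteq> {}" using C ne by auto
  define M where "M = Max ((\<lambda>x. (f x + S) / 2) ` C)"
  have "M \<in> (\<lambda>x. (f x + S) / 2) ` C" unfolding M_def using C Cne by (intro Max_in) auto
  then obtain x0 where "x0 \<in> C" "M = (f x0 + S) / 2" by auto
  hence MS: "M < S" using lt C by force
  have "f z \<le> M" if "z \<in> K" for z
  proof -
    obtain x where "x \<in> C" "f z < (f x + S) / 2" using C \<open>z \<in> K\<close> by auto
    moreover have "(f x + S) / 2 \<le> M" unfolding M_def using C \<open>x \<in> C\<close> by (intro Max_ge) auto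
    ultimately show ?thesis by simp
  qed
  hence "S \<le> M" unfolding S_def using ne by (intro cSup_least) auto
  thus False using MS by simp
qed

lemma cm_set_ne:
  fixes g :: "real \<Rightarrow> real"
  assumes "\<forall>z. g z \<le> (C::real)"
  shows "{D x | D. concave_on UNIV D \<and> (\<forall>z. g z \<le> D z)} \<noteq> {}"
proof -
  have "concave_on UNIV (\<lambda>z::real. C + 0 * z)" by (rule concave_affine)
  hence "(\<lambda>z. C + 0 * z) x \<in> {D x | D. concave_on UNIV D \<and> (\<forall>z. g z \<le> D z)}" using assms by auto
  thus ?thesis by blast
qed

lemma cm_bdd: "bdd_below {D (x::real) | D. concave_on UNIV D \<and> (\<forall>z. (g::real\<Rightarrow>real) z \<le> D z)}"
  by (rule bdd_belowI[of _ "g x"]) auto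
lemma cm_ge:
  fixes g :: "real \<Rightarrow> real"
  assumes "\<forall>z. g z \<le> (C::real)"
  shows "g x \<le> concave_majorant g x"
  unfolding concave_majorant_def using cm_set_ne[OF assms] by (intro cInf_greatest) auto

lemma cm_le:
  fixes g :: "real \<Rightarrow> real"
  assumes "concave_on UNIV D" "\<forall>z. g z \<le> D z"
  shows "concave_majorant g x \<le> D x"
  unfolding concave_majorant_def using assms by (intro cInf_lower[OF _ cm_bdd]) auto

lemma cm_concave:
  fixes g :: "real \<Rightarrow> real"
  assumes bd: "\<forall>z. g z \<le> (C::real)"
  shows "concave_on UNIV (concave_majorant g)"
  unfolding concave_on_iff
proof (intro conjI ballI allI impI)
  fix x y :: real and u v :: real
  assume uv: "0 \<le> u" "0 \<le> v" "u + v = 1"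
  show "u * concave_majorant g x + v * concave_majorant g y \<le> concave_majorant g (u *\<^sub>R x + v *\<^sub>R y)"
    unfolding concave_majorant_def[of g "u *\<^sub>R x + v *\<^sub>R y"]
  proof (rule cInf_greatest[OF cm_set_ne[OF bd]])
    fix w assume "w \<in> {D (u *\<^sub>R x + v *\<^sub>R y) | D. concave_on UNIV D \<and> (\<forall>z. g z \<le> D z)}"
    then obtain D where D: "w = D (u *\<^sub>R x + v *\<^sub>R y)" "concave_on UNIV D" "\<forall>z. g z \<le> D z" by auto
    have "u * D x + v * D y \<le> D (u *\<^sub>R x + v *\<^sub>R y)" using D(2) uv unfolding concave_on_iff by auto
    moreover have "u * concave_majorant g x \<le> u * D x" using cm_le[OF D(2,3)] uv by (intro mult_left_mono) auto
    moreover have "v * concave_majorant g y \<le> v * D y" using cm_le[OF D(2,3)] uv by (intro mult_left_mono) auto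
    ultimately show "u * concave_majorant g x + v * concave_majorant g y \<le> w" using D(1) by simp
  qed
qed simp

definition Mset :: "(real \<Rightarrow> real) \<Rightarrow> real \<Rightarrow> real set" where
  "Mset g x = {y. \<forall>z. g z + x * z \<le> g y + x * y}"

lemma usc_add_linear:
  assumes u: "usc g" shows "usc (\<lambda>z. g z + x * z)"
  unfolding usc_def
proof (intro allI impI)
  fix y e :: real assume e: "e > 0"
  obtain d1 where d1: "d1 > 0" "\<forall>z. \<bar>z - y\<bar> < d1 \<longrightarrow> g z < g y + e / 2"
    using u e unfolding usc_def by (meson half_gt_zero)
  define d where "d = min d1 (e / (2 * (\<bar>x\<bar> + 1)))"
  have d: "d > 0" using d1 e by (simp add: d_def)
  show "\<exists>d>0. \<forall>z. \<bar>z - y\<bar> < d \<longrightarrow> g z + x * z < g y + x * y + e"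
  proof (intro exI[of _ d] conjI allI impI d)
    fix z assume z: "\<bar>z - y\<bar> < d"
    have "\<bar>x * z - x * y\<bar> = \<bar>x\<bar> * \<bar>z - y\<bar>" by (simp add: abs_mult[symmetric] algebra_simps)
    also have "\<dots> \<le> (\<bar>x\<bar> + 1) * \<bar>z - y\<bar>" by (simp add: mult_right_mono)
    also have "\<dots> \<le> (\<bar>x\<bar> + 1) * (e / (2 * (\<bar>x\<bar> + 1)))"
      using z by (intro mult_left_mono) (auto simp: d_def)
    also have "\<dots> = e / 2" by (simp add: field_simps)
    finally have "\<bar>x * z - x * y\<bar> \<le> e / 2" .
    moreover have "g z < g y + e / 2" using d1 z by (simp add: d_def)
    ultimately show "g z + x * z < g y + x * y + e" by linarith
  qed
qed

lemma coercive:
  fixes g :: "real \<Rightarrow> real" and x C K :: real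
  assumes gb: "\<forall>z. g z \<le> C - z\<^sup>2 / 4"
  shows "\<exists>R>0. \<forall>z. \<bar>z\<bar> \<ge> R \<longrightarrow> g z + x * z + \<bar>z\<bar> < K"
proof -
  define R where "R = 4 * \<bar>x\<bar> + 4 * \<bar>C - K\<bar> + 8"
  have R: "R > 0" unfolding R_def by (smt (verit) abs_ge_zero)
  show ?thesis
  proof (intro exI[of _ R] conjI allI impI R)
    fix z assume z: "\<bar>z\<bar> \<ge> R"
    have z1: "\<bar>z\<bar> \<ge> 1" using z unfolding R_def by (smt (verit) abs_ge_zero)
    have h1: "\<bar>z\<bar> * R \<le> \<bar>z\<bar> * \<bar>z\<bar>" using z by (intro mult_left_mono) auto
    have h2: "\<bar>z\<bar> * \<bar>z\<bar> = z\<^sup>2" by (simp add: power2_eq_square)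
    have h3: "\<bar>z\<bar> * R = 4 * (\<bar>z\<bar> * \<bar>x\<bar> + \<bar>z\<bar> * \<bar>C - K\<bar> + 2 * \<bar>z\<bar>)"
      by (simp add: R_def algebra_simps)
    have "z\<^sup>2 / 4 \<ge> \<bar>z\<bar> * \<bar>x\<bar> + \<bar>z\<bar> * \<bar>C - K\<bar> + 2 * \<bar>z\<bar>"
      using h1 unfolding h2 h3 by simp
    moreover have "\<bar>z\<bar> * \<bar>C - K\<bar> \<ge> \<bar>C - K\<bar>" using mult_right_mono[OF z1, of "\<bar>C - K\<bar>"] by simp
    moreover have "x * z \<le> \<bar>z\<bar> * \<bar>x\<bar>" by (metis abs_ge_self abs_mult mult.commute)
    moreover have "g z \<le> C - z\<^sup>2 / 4" using gb by simp
    ultimately show "g z + x * z + \<bar>z\<bar> < K" using z1 by (smt (verit))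
  qed
qed

lemma Mset_facts:
  fixes g :: "real \<Rightarrow> real"
  assumes u: "usc g" and gb: "\<forall>z. g z \<le> C - z\<^sup>2 / 4"
  shows "Mset g x \<noteq> {}" "bdd_above (Mset g x)" "Sup (Mset g x) \<in> Mset g x"
proof -
  obtain R where R: "R > 0" "\<forall>z. \<bar>z\<bar> \<ge> R \<longrightarrow> g z + x * z + \<bar>z\<bar> < g 0"
    using coercive[OF gb, of x "g 0"] by blast
  obtain y0 where y0: "y0 \<in> {-R..R}" "\<forall>z\<in>{-R..R}. g z + x * z \<le> g y0 + x * y0"
    using usc_attains[OF usc_add_linear[OF u, of x], of "{-R..R}"] R by auto
  have y00: "g 0 + x * 0 \<le> g y0 + x * y0" using y0(2)[rule_format, of 0] R by simp
  have y0M: "y0 \<in> Mset g x" unfolding Mset_def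
  proof (safe)
    fix z show "g z + x * z \<le> g y0 + x * y0"
    proof (cases "\<bar>z\<bar> \<ge> R")
      case True thus ?thesis using R y00 by force
    next
      case False hence "z \<in> {-R..R}" by auto
      thus ?thesis using y0 by blast
    qed
  qed
  thus "Mset g x \<noteq> {}" by auto
  have bd: "\<bar>y\<bar> < R" if "y \<in> Mset g x" for y
  proof (rule ccontr)
    assume "\<not> \<bar>y\<bar> < R"
    hence "g y + x * y + \<bar>y\<bar> < g 0" using R by auto
    moreover have "g 0 + x * 0 \<le> g y + x * y" using that unfolding Mset_def by blast
    ultimately show False by simp
  qed
  show bdd: "bdd_above (Mset g x)" using bd by (intro bdd_aboveI[of _ R]) force
  have eq: "Mset g x = {y. g y0 + x * y0 \<le> g y + x * y}"
    using y0M unfolding Mset_def by (auto intro: order_trans)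
  have "closed (Mset g x)" unfolding eq by (rule usc_closed[OF usc_add_linear[OF u]])
  thus "Sup (Mset g x) \<in> Mset g x" using closed_contains_Sup y0M bdd by blast
qed

lemma rd_mono:
  fixes f :: "real \<Rightarrow> real"
  assumes cf: "concave_on UNIV f" and s: "s1 < s2"
  shows "right_deriv f s2 \<le> right_deriv f s1"
proof -
  have a: "f s2 \<le> f s1 + right_deriv f s1 * (s2 - s1)" by (rule right_deriv_super[OF cf])
  have b: "f s1 \<le> f s2 + right_deriv f s2 * (s1 - s2)" by (rule right_deriv_super[OF cf])
  have "0 \<le> (right_deriv f s1 - right_deriv f s2) * (s2 - s1)" using a b by (simp add: algebra_simps)
  thus ?thesis using s by (simp add: zero_le_mult_iff)
qed

lemma part_i:
  fixes g :: "real \<Rightarrow> real"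
  assumes u: "usc g" and gb: "\<forall>z. g z \<le> C - z\<^sup>2 / 4"
    and ys: "y \<in> stieltjes_support (right_deriv (concave_majorant g))"
  shows "y \<in> closure (range (\<lambda>x. Sup (Mset g x)))"
  unfolding closure_approachable
proof (intro allI impI)
  fix e :: real assume e: "e > 0"
  define Cb where "Cb = concave_majorant g"
  define c where "c = right_deriv Cb"
  have gC: "\<forall>z. g z \<le> C"
  proof
    fix z :: real have "z\<^sup>2 / 4 \<ge> 0" by simp
    thus "g z \<le> C" using gb by (smt (verit))
  qed
  have cc: "concave_on UNIV Cb" unfolding Cb_def by (rule cm_concave[OF gC])
  have sup: "Cb t \<le> Cb s + c s * (t - s)" for s t unfolding c_def by (rule right_deriv_super[OF cc])
  obtain s where s: "s \<in> {y - e<..<y + e}" "c s \<noteq> c y"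
    using ys e unfolding stieltjes_support_def c_def Cb_def by blast
  define s1 where "s1 = min s y"
  define s2 where "s2 = max s y"
  have s12: "s1 < s2" using s unfolding s1_def s2_def by (metis max_def min_def not_le order_less_le)
  have cs: "c s2 < c s1"
  proof -
    have "c s2 \<le> c s1" unfolding c_def by (rule rd_mono[OF cc s12])
    moreover have "c s1 \<noteq> c s2" using s unfolding s1_def s2_def by (metis max_def min_def)
    ultimately show ?thesis by simp
  qed
  define kk where "kk = (c s1 + c s2) / 2"
  have kk: "c s2 < kk" "kk < c s1" using cs unfolding kk_def by auto
  define zs where "zs = Sup (Mset g (- kk))"
  have zM: "zs \<in> Mset g (- kk)" unfolding zs_def by (rule Mset_facts(3)[OF u gb])
  define m where "m = g zs + (- kk) * zs"
  have gT: "\<forall>z. g z \<le> m + kk * z" using zM unfolding Mset_def m_def by (auto simp: algebra_simps)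
  have CT: "Cb z \<le> m + kk * z" for z unfolding Cb_def by (rule cm_le[OF concave_affine gT])
  have Cz: "Cb zs \<ge> m + kk * zs"
    using cm_ge[OF gC, of zs] unfolding Cb_def m_def by simp
  have z2: "zs \<le> s2"
  proof (rule ccontr)
    assume "\<not> zs \<le> s2"
    hence pos: "zs - s2 > 0" by simp
    have "c s2 * (zs - s2) < kk * (zs - s2)" using kk(1) pos by (rule mult_strict_right_mono)
    thus False using sup[where s=s2 and t=zs] CT[of s2] Cz by (simp add: algebra_simps)
  qed
  have z1: "s1 \<le> zs"
  proof (rule ccontr)
    assume "\<not> s1 \<le> zs"
    hence neg: "zs - s1 < 0" by simp
    have "c s1 * (zs - s1) < kk * (zs - s1)" using kk(2) neg by (rule mult_strict_right_mono_neg)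
    thus False using sup[where s=s1 and t=zs] CT[of s1] Cz by (simp add: algebra_simps)
  qed
  have "dist zs y < e"
    using z1 z2 s(1) unfolding s1_def s2_def dist_real_def by (auto simp: min_def max_def split: if_splits)
  thus "\<exists>w\<in>range (\<lambda>x. Sup (Mset g x)). dist w y < e" unfolding zs_def by blast
qed

lemma part_ii:
  fixes g :: "real \<Rightarrow> real"
  assumes u: "usc g" and gb: "\<forall>z. g z \<le> C - z\<^sup>2 / 4"
  shows "Sup (Mset g x) \<in> stieltjes_support (right_deriv (concave_majorant g))"
  unfolding stieltjes_support_def
proof (intro CollectI allI impI notI)
  fix e :: real assume e: "e > 0"
  define y where "y = Sup (Mset g x)"
  define Cb where "Cb = concave_majorant g"
  define c where "c = right_deriv Cb"
  assume "\<exists>k. \<forall>z\<in>{Sup (Mset g x) - e<..<Sup (Mset g x) + e}. right_deriv (concave_majorant g) z = k"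
  then obtain k where ck: "\<forall>z\<in>{y - e<..<y + e}. c z = k" unfolding y_def c_def Cb_def by blast
  have gC: "\<forall>z. g z \<le> C"
  proof
    fix z :: real have "z\<^sup>2 / 4 \<ge> 0" by simp
    thus "g z \<le> C" using gb by (smt (verit))
  qed
  have cc: "concave_on UNIV Cb" unfolding Cb_def by (rule cm_concave[OF gC])
  have sup: "Cb t \<le> Cb s + c s * (t - s)" for s t unfolding c_def by (rule right_deriv_super[OF cc])
  have yM: "y \<in> Mset g x" unfolding y_def by (rule Mset_facts(3)[OF u gb])
  have bdd: "bdd_above (Mset g x)" by (rule Mset_facts(2)[OF u gb])
  define m where "m = g y + x * y"
  have phi: "g z + x * z \<le> m" for z using yM unfolding Mset_def m_def by blast
  have gl: "\<forall>z. g z \<le> m + (- x) * z" using phi by (simp add: algebra_simps)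
  have Cl: "Cb z \<le> m + (- x) * z" for z unfolding Cb_def by (rule cm_le[OF concave_affine gl])
  have Cg: "g z \<le> Cb z" for z unfolding Cb_def by (rule cm_ge[OF gC])
  have c1: "c (y - e/2) = k" "c (y + e/2) = k" using ck e by auto
  have a1: "Cb y \<le> Cb (y - e/2) + k * (e/2)" using sup[where s="y - e/2" and t=y] c1 by simp
  have a2: "Cb y \<le> Cb (y + e/2) - k * (e/2)" using sup[where s="y + e/2" and t=y] c1 by simp
  have "g y \<le> g y + x * (e/2) + k * (e/2)"
    using a1 Cl[of "y - e/2"] Cg[of y] unfolding m_def by (simp add: algebra_simps)
  hence "0 \<le> (x + k) * (e/2)" by (simp add: algebra_simps)
  hence kx: "- x \<le> k" using e by (simp add: zero_le_mult_iff)
  have "(- x) * (e/2) \<le> k * (e/2)" using kx e by (intro mult_right_mono) auto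
  hence Cyp: "Cb (y + e/2) \<ge> m + (- x) * (y + e/2)"
    using a2 Cg[of y] unfolding m_def by (simp add: algebra_simps)
  define \<delta> where "\<delta> = e / 4"
  have \<delta>: "\<delta> > 0" "\<delta> < e / 2" using e by (auto simp: \<delta>_def)
  obtain R where R: "R > 0" "\<forall>z. \<bar>z\<bar> \<ge> R \<longrightarrow> g z + x * z + \<bar>z\<bar> < m - \<bar>y\<bar>"
    using coercive[OF gb, of x "m - \<bar>y\<bar>"] by blast
  define R' where "R' = max R (y + \<delta> + 1)"
  have R'y: "R' - y > 0" using \<delta> unfolding R'_def by auto
  obtain z0 where z0: "z0 \<in> {y + \<delta>..R'}" "\<forall>z\<in>{y + \<delta>..R'}. g z + x * z \<le> g z0 + x * z0"
  proof -
    have le: "y + \<delta> \<le> R'" unfolding R'_def by simp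
    show ?thesis using usc_attains[OF usc_add_linear[OF u, of x], of "{y + \<delta>..R'}"] le that by auto
  qed
  have z0m: "g z0 + x * z0 < m"
  proof (rule ccontr)
    assume "\<not> g z0 + x * z0 < m"
    hence "z0 \<in> Mset g x" using phi unfolding Mset_def m_def by (smt (verit) mem_Collect_eq)
    hence "z0 \<le> y" unfolding y_def using bdd by (rule cSup_upper)
    thus False using z0(1) \<delta> by auto
  qed
  define m0 where "m0 = m - (g z0 + x * z0)"
  have m0: "m0 > 0" using z0m by (simp add: m0_def)
  define \<beta> where "\<beta> = min 1 (m0 / (R' - y))"
  have \<beta>: "\<beta> > 0" "\<beta> \<le> 1" "\<beta> \<le> m0 / (R' - y)" using m0 R'y by (auto simp: \<beta>_def)
  have key: "g z + x * z \<le> m - \<beta> * (z - y)" if zy: "z \<ge> y + \<delta>" for z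
  proof (cases "z \<ge> R'")
    case True
    hence "\<bar>z\<bar> \<ge> R" using R unfolding R'_def by auto
    hence "g z + x * z + \<bar>z\<bar> < m - \<bar>y\<bar>" using R by blast
    hence "g z + x * z \<le> m - (z - y)" by (smt (verit) abs_ge_self abs_minus_cancel)
    moreover have "\<beta> * (z - y) \<le> 1 * (z - y)" using \<beta> zy \<delta> by (intro mult_right_mono) auto
    ultimately show ?thesis by simp
  next
    case False
    hence "z \<in> {y + \<delta>..R'}" using zy by auto
    hence "g z + x * z \<le> m - m0" using z0 unfolding m0_def by auto
    moreover have "\<beta> * (z - y) \<le> (m0 / (R' - y)) * (R' - y)"
      using \<beta> zy \<delta> False by (intro mult_mono) auto
    moreover have "(m0 / (R' - y)) * (R' - y) = m0" using R'y by simp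
    ultimately show ?thesis by simp
  qed
  define D where "D = (\<lambda>z. min (m + (- x) * z) ((m + \<beta> * \<delta> + \<beta> * y) + (- x - \<beta>) * z))"
  have Dc: "concave_on UNIV D" unfolding D_def by (intro concave_min concave_affine)
  have Dg: "\<forall>z. g z \<le> D z"
  proof
    fix z
    have "g z \<le> (m + \<beta> * \<delta> + \<beta> * y) + (- x - \<beta>) * z"
    proof (cases "z \<ge> y + \<delta>")
      case True
      have "\<beta> * \<delta> \<ge> 0" using \<beta> \<delta> by simp
      thus ?thesis using key[OF True] by (simp add: algebra_simps)
    next
      case False
      hence "\<beta> * (z - y) \<le> \<beta> * \<delta>" using \<beta> by (intro mult_left_mono) auto
      thus ?thesis using phi[of z] by (simp add: algebra_simps)
    qed
    thus "g z \<le> D z" using gl unfolding D_def by simp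
  qed
  have "Cb (y + e/2) \<le> D (y + e/2)" unfolding Cb_def by (rule cm_le[OF Dc Dg])
  also have "\<dots> \<le> (m + \<beta> * \<delta> + \<beta> * y) + (- x - \<beta>) * (y + e/2)" unfolding D_def by simp
  also have "\<dots> = m + (- x) * (y + e/2) - \<beta> * (e/2 - \<delta>)" by (simp add: field_simps)
  also have "\<dots> < m + (- x) * (y + e/2)" using \<beta> \<delta> by simp
  finally show False using Cyp by simp
qed

lemma left_lim_eq: assumes "(f \<longlongrightarrow> l) (at_left (z::real))" shows "left_lim f z = l"
  unfolding left_lim_def using assms by (intro tendsto_Lim) auto

lemma lim_left_le:
  fixes f :: "real \<Rightarrow> real"
  assumes "(f \<longlongrightarrow> l) (at_left z)" "b < z" "\<forall>w. b < w \<and> w < z \<longrightarrow> f w \<le> B"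
  shows "l \<le> B"
proof (rule tendsto_upperbound[OF assms(1)])
  show "\<forall>\<^sub>F w in at_left z. f w \<le> B" unfolding eventually_at_left_field using assms by blast
qed auto

lemma cadlag_left:
  assumes "cadlag f" shows "(f \<longlongrightarrow> left_lim f z) (at_left z)"
proof -
  obtain l where l: "(f \<longlongrightarrow> l) (at_left z)" using assms unfolding cadlag_def by blast
  thus ?thesis using left_lim_eq[OF l] by simp
qed

lemma cadlag_right:
  assumes "cadlag f" shows "(f \<longlongrightarrow> f z) (at_right z)"
  using assms unfolding cadlag_def continuous_within by blast

lemma usc_version_usc:
  fixes f :: "real \<Rightarrow> real"
  assumes cd: "cadlag f" shows "usc (usc_version f)"
  unfolding usc_def
proof (intro allI impI)
  fix y e :: real assume e: "e > 0"
  define l where "l = left_lim f y"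
  have "\<forall>\<^sub>F w in at_right y. dist (f w) (f y) < e / 2"
    using tendstoD[OF cadlag_right[OF cd, of y], of "e/2"] e by simp
  then obtain b1 where b1: "b1 > y" "\<forall>w>y. w < b1 \<longrightarrow> dist (f w) (f y) < e / 2"
    unfolding eventually_at_right_field by blast
  have "\<forall>\<^sub>F w in at_left y. dist (f w) l < e / 2"
    using tendstoD[OF cadlag_left[OF cd, of y], of "e/2"] e unfolding l_def by simp
  then obtain b2 where b2: "b2 < y" "\<forall>w>b2. w < y \<longrightarrow> dist (f w) l < e / 2"
    unfolding eventually_at_left_field by blast
  define d where "d = min (b1 - y) (y - b2)"
  have uy: "f y \<le> usc_version f y" "l \<le> usc_version f y" unfolding usc_version_def l_def by auto
  show "\<exists>d>0. \<forall>z. \<bar>z - y\<bar> < d \<longrightarrow> usc_version f z < usc_version f y + e"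
  proof (intro exI[of _ d] conjI allI impI)
    show "d > 0" using b1 b2 by (simp add: d_def)
    fix z assume z: "\<bar>z - y\<bar> < d"
    consider "z = y" | "y < z" | "z < y" by linarith
    thus "usc_version f z < usc_version f y + e"
    proof cases
      case 1 thus ?thesis using e by simp
    next
      case 2
      have zb: "z < b1" using z 2 by (simp add: d_def)
      have fz: "f z \<le> f y + e / 2" using b1(2)[rule_format, of z] 2 zb unfolding dist_real_def by (smt (verit))
      have "left_lim f z \<le> f y + e / 2"
      proof (rule lim_left_le[OF cadlag_left[OF cd] 2])
        show "\<forall>w. y < w \<and> w < z \<longrightarrow> f w \<le> f y + e / 2"
        proof (intro allI impI)
          fix w assume "y < w \<and> w < z"
          hence "dist (f w) (f y) < e / 2" using b1(2) zb by auto
          thus "f w \<le> f y + e / 2" unfolding dist_real_def by (smt (verit))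
        qed
      qed
      hence "f z < usc_version f y + e" "left_lim f z < usc_version f y + e" using fz uy e by linarith+
      thus ?thesis unfolding usc_version_def[of f z] by simp
    next
      case 3
      have zb: "b2 < z" using z 3 by (simp add: d_def)
      have fz: "f z \<le> l + e / 2" using b2(2)[rule_format, of z] 3 zb unfolding dist_real_def by (smt (verit))
      have "left_lim f z \<le> l + e / 2"
      proof (rule lim_left_le[OF cadlag_left[OF cd] zb])
        show "\<forall>w. b2 < w \<and> w < z \<longrightarrow> f w \<le> l + e / 2"
        proof (intro allI impI)
          fix w assume "b2 < w \<and> w < z"
          hence "dist (f w) l < e / 2" using b2(2) 3 by auto
          thus "f w \<le> l + e / 2" unfolding dist_real_def by (smt (verit))
        qed
      qed
      hence "f z < usc_version f y + e" "left_lim f z < usc_version f y + e" using fz uy e by linarith+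
      thus ?thesis unfolding usc_version_def[of f z] by simp
    qed
  qed
qed

lemma usc_sub_sq:
  assumes u: "usc f" shows "usc (\<lambda>z. f z - z\<^sup>2 / 2)"
  unfolding usc_def
proof (intro allI impI)
  fix y e :: real assume e: "e > 0"
  obtain d1 where d1: "d1 > 0" "\<forall>z. \<bar>z - y\<bar> < d1 \<longrightarrow> f z < f y + e / 2"
    using u e unfolding usc_def by (meson half_gt_zero)
  have "isCont (\<lambda>z::real. z\<^sup>2 / 2) y" by (intro continuous_intros) auto
  then obtain d2 where d2: "d2 > 0" "\<forall>z. z \<noteq> y \<and> norm (z - y) < d2 \<longrightarrow> norm (z\<^sup>2 / 2 - y\<^sup>2 / 2) < e / 2"
    using \<open>isCont _ y\<close>[unfolded isCont_def LIM_eq, rule_format, of "e/2"] e by auto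
  show "\<exists>d>0. \<forall>z. \<bar>z - y\<bar> < d \<longrightarrow> f z - z\<^sup>2 / 2 < f y - y\<^sup>2 / 2 + e"
  proof (intro exI[of _ "min d1 d2"] conjI allI impI)
    show "min d1 d2 > 0" using d1 d2 by simp
    fix z assume z: "\<bar>z - y\<bar> < min d1 d2"
    have a: "f z < f y + e / 2" using d1 z by simp
    show "f z - z\<^sup>2 / 2 < f y - y\<^sup>2 / 2 + e"
    proof (cases "z = y")
      case True thus ?thesis using e by simp
    next
      case False
      hence "\<bar>z\<^sup>2 / 2 - y\<^sup>2 / 2\<bar> < e / 2" using d2 z by auto
      thus ?thesis using a by linarith
    qed
  qed
qed

lemma growth:
  fixes f :: "real \<Rightarrow> real"
  assumes cd: "cadlag f" and lim: "((\<lambda>x. f x / x\<^sup>2) \<longlongrightarrow> 0) at_infinity"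
  shows "\<exists>C. \<forall>z. usc_version f z - z\<^sup>2 / 2 \<le> C - z\<^sup>2 / 4"
proof -
  have "\<forall>\<^sub>F x in at_infinity. dist (f x / x\<^sup>2) 0 < 1/8"
    using tendstoD[OF lim, of "1/8"] by simp
  then obtain b where b: "\<forall>x. norm x \<ge> b \<longrightarrow> dist (f x / x\<^sup>2) 0 < 1/8"
    unfolding eventually_at_infinity by blast
  define R0 where "R0 = max b 1"
  have fb: "f w \<le> w\<^sup>2 / 8" if "\<bar>w\<bar> \<ge> R0" for w
  proof -
    have "\<bar>f w / w\<^sup>2\<bar> < 1/8" using b that unfolding R0_def by (auto simp: dist_real_def)
    moreover have "w\<^sup>2 > 0" using that unfolding R0_def by auto
    ultimately have "\<bar>f w\<bar> < w\<^sup>2 / 8" by (simp add: abs_div_pos divide_simps)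
    thus ?thesis by simp
  qed
  obtain B where B: "\<forall>z\<in>{-(R0+1)..R0+1}. usc_version f z \<le> B"
    using usc_bdd[OF usc_version_usc[OF cd]] by blast
  have ub: "usc_version f z \<le> max B (1/4) + z\<^sup>2 / 4" for z
  proof (cases "\<bar>z\<bar> \<ge> R0 + 1")
    case False
    hence "z \<in> {-(R0+1)..R0+1}" by auto
    hence "usc_version f z \<le> B" using B by blast
    moreover have "z\<^sup>2 / 4 \<ge> 0" by simp
    ultimately show ?thesis by (smt (verit))
  next
    case True
    have R01: "R0 \<ge> 1" unfolding R0_def by simp
    have sq: "(\<bar>z\<bar> + 1)\<^sup>2 / 8 \<le> z\<^sup>2 / 4 + 1/4"
    proof -
      have "2 * \<bar>z\<bar> \<le> z\<^sup>2 + 1" using sum_squares_bound[of "\<bar>z\<bar>" 1] by (simp add: power2_eq_square)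
      hence "(\<bar>z\<bar> + 1)\<^sup>2 \<le> 2 * z\<^sup>2 + 2" by (simp add: power2_eq_square algebra_simps)
      thus ?thesis by simp
    qed
    have w: "f w \<le> (\<bar>z\<bar> + 1)\<^sup>2 / 8" if "z - 1 < w" "w < z" for w
    proof -
      have "\<bar>w\<bar> \<ge> R0" using True that by auto
      hence "f w \<le> w\<^sup>2 / 8" by (rule fb)
      moreover have "\<bar>w\<bar> \<le> \<bar>z\<bar> + 1" using that by auto
      hence "w\<^sup>2 \<le> (\<bar>z\<bar> + 1)\<^sup>2" by (metis abs_ge_zero power2_abs power_mono)
      ultimately show ?thesis by simp
    qed
    have "left_lim f z \<le> (\<bar>z\<bar> + 1)\<^sup>2 / 8"
      by (rule lim_left_le[OF cadlag_left[OF cd], of "z - 1"]) (use w in auto)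
    moreover have "f z \<le> z\<^sup>2 / 8" using True R01 by (intro fb) auto
    moreover have "z\<^sup>2 / 8 \<le> z\<^sup>2 / 4" by simp
    moreover have "max B (1/4) \<ge> 1/4" by simp
    ultimately have "left_lim f z \<le> max B (1/4) + z\<^sup>2 / 4 \<and> f z \<le> max B (1/4) + z\<^sup>2 / 4"
      using sq by linarith
    thus ?thesis unfolding usc_version_def by simp
  qed
  show ?thesis
  proof (intro exI[of _ "max B (1/4)"] allI)
    fix z show "usc_version f z - z\<^sup>2 / 2 \<le> max B (1/4) - z\<^sup>2 / 4" using ub[of z] by linarith
  qed
qed

lemma amax_eq:
  "amax psi0 x = Sup (Mset (\<lambda>x. usc_version psi0 x - x\<^sup>2 / 2) x)"
proof -
  have e: "usc_version psi0 z - (z - x)\<^sup>2 / 2 = (usc_version psi0 z - z\<^sup>2 / 2 + x * z) - x\<^sup>2 / 2" for z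
    by (simp add: power2_eq_square field_simps)
  show ?thesis unfolding amax_def Mset_def e by (simp add: algebra_simps)
qed

theorem lemma2p1:
  fixes psi0 :: "real \<Rightarrow> real"
  assumes "cadlag psi0"
    and "((\<lambda>x. psi0 x / x\<^sup>2) \<longlongrightarrow> 0) at_infinity"
  shows "stieltjes_support (cbar psi0) \<subseteq> shock_structure psi0
    \<and> range (amax psi0) \<subseteq> stieltjes_support (cbar psi0)
    \<and> (closed (range (amax psi0)) \<longrightarrow> stieltjes_support (cbar psi0) = shock_structure psi0)"
proof -
  define g where "g = (\<lambda>x. usc_version psi0 x - x\<^sup>2 / 2)"
  have u: "usc g" unfolding g_def by (rule usc_sub_sq[OF usc_version_usc[OF assms(1)]])
  obtain C where gb: "\<forall>z. g z \<le> C - z\<^sup>2 / 4" using growth[OF assms] unfolding g_def by blast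
  have cb: "cbar psi0 = right_deriv (concave_majorant g)" unfolding cbar_def Cbar_def g_def ..
  have am: "amax psi0 = (\<lambda>x. Sup (Mset g x))" unfolding g_def by (rule ext) (rule amax_eq)
  have i: "stieltjes_support (cbar psi0) \<subseteq> shock_structure psi0"
    unfolding shock_structure_def cb am using part_i[OF u gb] by blast
  have ii: "range (amax psi0) \<subseteq> stieltjes_support (cbar psi0)"
    unfolding cb am using part_ii[OF u gb] by blast
  have iii: "stieltjes_support (cbar psi0) = shock_structure psi0" if "closed (range (amax psi0))"
    using i ii that unfolding shock_structure_def by (simp add: closure_closed subset_antisym)
  show ?thesis using i ii iii by blast
qed

end
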